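(* In the setting of the context, fix $i,j\in\{1,\dots,n-1\}$, $i\ne j$. Regard the conditional expectation $$\mathbb E_{\mathbb P}[\bar d_j\mid\bar d_i\in\mathcal W_{\delta_i}]=d-\sqrt{\frac{2}{\pi}}\,\frac{\rho_{ji}\,\sigma_j\,e^{-\frac{(d_i^*-d)^2}{2\sigma_i^2}}}{1+\mathrm{erf}\!\left(\frac{d_i^*-d}{\sqrt2\,\sigma_i}\right)}$$ as a function of the diffusion coefficient $g>0$ (all other parameters fixed). Then it is monotonically increasing in $g$ if $\rho_{ji}<0$ and monotonically decreasing in $g$ if $\rho_{ji}>0$. Moreover, for the ambiguity set $\mathcal M_g=\{g>0: (1-\epsilon)g_0^2\le g^2\le(1+\epsilon)g_0^2\}$, the distributionally robust cascading risk $$\mathcal R^{ji}:=\frac{d}{\inf_{\mathcal M_g}\mathbb E_{\mathbb P}[\bar d_j\mid\bar d_i\in\mathcal W_{\delta_i}]}-1$$ equals $\frac{d}{h(-\epsilon)}-1$ if $\rho_{ji}<0$, $\frac{d}{h(\epsilon)}-1$ if $\rho_{ji}>0$, and $0$ if $\rho_{ji}=0$, where $$h(\epsilon)=d-\sqrt{\frac{2}{\pi}}\,\frac{\rho_{ji}\,\sigma_{j,0}\sqrt{1+\epsilon}\;e^{-\frac{(d_i^*-d)^2}{2\sigma_{i,0}^2(1+\epsilon)}}}{1+\mathrm{erf}\!\left(\frac{d_i^*-d}{\sqrt{2(1+\epsilon)}\,\sigma_{i,0}}\right)}.$$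
   Context: Platoon of $n\ge 3$ vehicles with positions $\mathrm{x}_t\in\mathbb R^n$ and velocities $\mathrm{v}_t\in\mathbb R^n$ obeying $d\mathrm{x}_t=\mathrm{v}_t\,dt$, $d\mathrm{v}_t=-L\mathrm{v}_{t-\tau}dt-\beta L(\mathrm{x}_{t-\tau}-\mathrm{y})dt+g\,d\boldsymbol\xi_t$, where $L$ is the Laplacian of a connected undirected positively weighted graph with eigenvalues $0=\lambda_1<\lambda_2\le\dots\le\lambda_n$ and orthonormal eigenvectors $q_1=\frac1{\sqrt n}\mathbf 1_n,\dots,q_n$; $\mathrm{y}=[d,2d,\dots,nd]^T$, $d>0$; $\beta>0$; delay $\tau>0$; diffusion coefficient $g>0$; $\boldsymbol\xi_t$ a standard $n$-dimensional Wiener process. Stability $(\lambda_k\tau,\beta\tau)\in S$ for $k=2,\dots,n$ is assumed, with $S=\{(s_1,s_2): s_1\in(0,\pi/2),\ s_2\in(0,a/\tan a),\ a\in(0,\pi/2)\text{ solving }a\sin a=s_1\}$. The steady-state inter-vehicle distances $\bar d_k=\lim(x^{(k+1)}_t-x^{(k)}_t)$ form $\bar{\boldsymbol d}\sim\mathcal N(d\mathbf 1_{n-1},\Sigma)$ (standing known fact) with $\sigma_{kl}=g^2\frac{\tau^3}{2\pi}\sum_{m=1}^n(\tilde e_k^Tq_m)(\tilde e_l^Tq_m)f(\lambda_m\tau,\beta\tau)$, $\tilde e_k=e_{k+1}-e_k$, $f(s_1,s_2)=\int_{\mathbb R}\frac{dr}{(s_1s_2-r^2\cos r)^2+r^2(s_1-r\sin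 r)^2}$. Write $\sigma_k^2=\sigma_{kk}$ and $\rho_{ji}=\sigma_{ji}/(\sigma_i\sigma_j)$ (independent of $g$). $\mathcal W_{\delta_i}=(-\infty,d_i^* )$ with $d_i^*=d/(\delta_i+c)$, $\delta_i\ge0$, $c>0$ a constant. $g_0>0$ is a nominal estimate of $g$, $\epsilon\in(0,1)$, and $\sigma_{k,0}$ denotes $\sigma_k$ evaluated at $g=g_0$. $\mathrm{erf}(x)=\frac2{\sqrt\pi}\int_0^xe^{-t^2}dt$. *)

theory Defs
  imports "HOL-Analysis.Analysis"
begin

text \<open>Vehicles / vertices are indexed 1..n; vectors in R^n are functions nat => real
  restricted to {1..n}.  Eigenvector q m (m = 1..n) has components q m k, k = 1..n.\<close>

definition erf :: "real \<Rightarrow> real" where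
  "erf x = 2 / sqrt pi * interval_lebesgue_integral lborel (ereal 0) (ereal x) (\<lambda>t. exp (- (t\<^sup>2)))"

definition is_graph_laplacian :: "nat \<Rightarrow> (nat \<Rightarrow> nat \<Rightarrow> real) \<Rightarrow> (nat \<Rightarrow> nat \<Rightarrow> real) \<Rightarrow> bool" where
  "is_graph_laplacian n w L \<longleftrightarrow>
     (\<forall>k\<in>{1..n}. \<forall>l\<in>{1..n}. w k l = w l k \<and> w k l \<ge> 0) \<and>
     (\<forall>k\<in>{1..n}. w k k = 0) \<and>
     (\<forall>k\<in>{1..n}. \<forall>l\<in>{1..n}. L k l = (if k = l then (\<Sum>m=1..n. w k m) else - w k l)) \<and>
     (\<forall>k\<in>{1..n}. \<forall>l\<in>{1..n}.
        (k, l) \<in> {(a, b). a \<in> {1..n} \<and> b \<in> {1..n} \<and> w a b > 0}\<^sup>*)"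

definition is_eigendecomp :: "nat \<Rightarrow> (nat \<Rightarrow> nat \<Rightarrow> real) \<Rightarrow> (nat \<Rightarrow> real) \<Rightarrow> (nat \<Rightarrow> nat \<Rightarrow> real) \<Rightarrow> bool" where
  "is_eigendecomp n L lam q \<longleftrightarrow>
     (\<forall>m\<in>{1..n}. \<forall>k\<in>{1..n}. (\<Sum>l=1..n. L k l * q m l) = lam m * q m k) \<and>
     (\<forall>m\<in>{1..n}. \<forall>m'\<in>{1..n}. (\<Sum>k=1..n. q m k * q m' k) = (if m = m' then 1 else 0)) \<and>
     lam 1 = 0 \<and> 0 < lam 2 \<and> (\<forall>m. 2 \<le> m \<and> m < n \<longrightarrow> lam m \<le> lam (Suc m)) \<and>
     (\<forall>k\<in>{1..n}. q 1 k = 1 / sqrt (real n))"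

definition stab_region :: "(real \<times> real) set" where
  "stab_region = {(s1, s2). 0 < s1 \<and> s1 < pi / 2 \<and>
      (\<exists>a. 0 < a \<and> a < pi / 2 \<and> a * sin a = s1 \<and> 0 < s2 \<and> s2 < a / tan a)}"

definition fint :: "real \<Rightarrow> real \<Rightarrow> real" where
  "fint s1 s2 = (LINT r|lborel. 1 / ((s1 * s2 - r\<^sup>2 * cos r)\<^sup>2 + r\<^sup>2 * (s1 - r * sin r)\<^sup>2))"

text \<open>sigma_{kl} as a function of the diffusion coefficient g; etilde_k = e_(k+1) - e_k.\<close>
definition cov :: "nat \<Rightarrow> (nat \<Rightarrow> real) \<Rightarrow> (nat \<Rightarrow> nat \<Rightarrow> real) \<Rightarrow> real \<Rightarrow> real \<Rightarrow> real \<Rightarrow> nat \<Rightarrow> nat \<Rightarrow> real" where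
  "cov n lam q tau beta g k l = g\<^sup>2 * tau ^ 3 / (2 * pi) *
     (\<Sum>m=1..n. (q m (Suc k) - q m k) * (q m (Suc l) - q m l) * fint (lam m * tau) (beta * tau))"

definition sd :: "nat \<Rightarrow> (nat \<Rightarrow> real) \<Rightarrow> (nat \<Rightarrow> nat \<Rightarrow> real) \<Rightarrow> real \<Rightarrow> real \<Rightarrow> real \<Rightarrow> nat \<Rightarrow> real" where
  "sd n lam q tau beta g k = sqrt (cov n lam q tau beta g k k)"

definition corr :: "nat \<Rightarrow> (nat \<Rightarrow> real) \<Rightarrow> (nat \<Rightarrow> nat \<Rightarrow> real) \<Rightarrow> real \<Rightarrow> real \<Rightarrow> real \<Rightarrow> nat \<Rightarrow> nat \<Rightarrow> real" where
  "corr n lam q tau beta g j i = cov n lam q tau beta g j i / (sd n lam q tau beta g i * sd n lam q tau beta g j)"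

text \<open>The closed-form conditional expectation E[dbar_j | dbar_i in W_delta_i] with d_i^* = ds.\<close>
definition condexp :: "nat \<Rightarrow> (nat \<Rightarrow> real) \<Rightarrow> (nat \<Rightarrow> nat \<Rightarrow> real) \<Rightarrow> real \<Rightarrow> real \<Rightarrow> real \<Rightarrow> real \<Rightarrow> nat \<Rightarrow> nat \<Rightarrow> real \<Rightarrow> real" where
  "condexp n lam q tau beta d ds i j g =
     d - sqrt (2 / pi) * (corr n lam q tau beta g j i * sd n lam q tau beta g j *
         exp (- ((ds - d)\<^sup>2 / (2 * (sd n lam q tau beta g i)\<^sup>2))))
       / (1 + erf ((ds - d) / (sqrt 2 * sd n lam q tau beta g i)))"

definition hfun :: "nat \<Rightarrow> (nat \<Rightarrow> real) \<Rightarrow> (nat \<Rightarrow> nat \<Rightarrow> real) \<Rightarrow> real \<Rightarrow> real \<Rightarrow> real \<Rightarrow> real \<Rightarrow> real \<Rightarrow> nat \<Rightarrow> nat \<Rightarrow> real \<Rightarrow> real" where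
  "hfun n lam q tau beta g0 d ds i j e =
     d - sqrt (2 / pi) * (corr n lam q tau beta g0 j i * sd n lam q tau beta g0 j * sqrt (1 + e) *
         exp (- ((ds - d)\<^sup>2 / (2 * (sd n lam q tau beta g0 i)\<^sup>2 * (1 + e)))))
       / (1 + erf ((ds - d) / (sqrt (2 * (1 + e)) * sd n lam q tau beta g0 i)))"

definition ambiguity_set :: "real \<Rightarrow> real \<Rightarrow> real set" where
  "ambiguity_set g0 eps = {g. 0 < g \<and> (1 - eps) * g0\<^sup>2 \<le> g\<^sup>2 \<and> g\<^sup>2 \<le> (1 + eps) * g0\<^sup>2}"

definition cascading_risk :: "nat \<Rightarrow> (nat \<Rightarrow> real) \<Rightarrow> (nat \<Rightarrow> nat \<Rightarrow> real) \<Rightarrow> real \<Rightarrow> real \<Rightarrow> real \<Rightarrow> real \<Rightarrow> real \<Rightarrow> real \<Rightarrow> nat \<Rightarrow> nat \<Rightarrow> real" where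
  "cascading_risk n lam q tau beta g0 eps d ds i j =
     d / (INF g\<in>ambiguity_set g0 eps. condexp n lam q tau beta d ds i j g) - 1"

end

theory Submission imports Defs "HOL-Probability.Distributions" "HOL-Real_Asymp.Real_Asymp" begin

lemma erf_deriv: "(erf has_real_derivative (2 / sqrt pi * exp (- (x\<^sup>2)))) (at x)"
proof -
  define a where "a = - \<bar>x\<bar> - 1"
  define b where "b = \<bar>x\<bar> + 1"
  have cont: "continuous_on {a..b} (\<lambda>t::real. exp (- (t\<^sup>2)))"
    by (intro continuous_intros)
  have "((\<lambda>u. LBINT y=ereal 0..ereal u. exp (- (y\<^sup>2))) has_vector_derivative (exp (- (x\<^sup>2)))) (at x within {a..b})"
    by (rule interval_integral_FTC2[OF _ _ cont]) (auto simp: a_def b_def)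
  moreover have "at x within {a..b} = at x"
    by (rule at_within_Icc_at) (auto simp: a_def b_def)
  ultimately have "((\<lambda>u. LBINT y=ereal 0..ereal u. exp (- (y\<^sup>2))) has_real_derivative (exp (- (x\<^sup>2)))) (at x)"
    by (simp only: has_real_derivative_iff_has_vector_derivative)
  then have "((\<lambda>u. 2 / sqrt pi * (LBINT y=ereal 0..ereal u. exp (- (y\<^sup>2)))) has_real_derivative (2 / sqrt pi * exp (- (x\<^sup>2)))) (at x)"
    by (rule DERIV_cmult)
  then show ?thesis unfolding erf_def[abs_def] .
qed

lemma erf_0: "erf 0 = 0"
  by (simp add: erf_def)

lemma erf_odd: "erf (- x) = - erf x"
proof -
  have "(LBINT t=ereal 0..ereal (-x). exp (- (t\<^sup>2))) = (LBINT t=ereal x..ereal 0. exp (- ((-t)\<^sup>2)))"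
    using interval_integral_reflect[of "ereal 0" "ereal (-x)" "\<lambda>t. exp (- (t\<^sup>2))"] by simp
  also have "\<dots> = - (LBINT t=ereal 0..ereal x. exp (- (t\<^sup>2)))"
    by (subst interval_integral_endpoints_reverse) simp
  finally show ?thesis unfolding erf_def by simp
qed

lemma erf_le_1_nonneg:
  assumes "0 \<le> y" shows "erf y \<le> 1"
proof -
  have g: "has_bochner_integral lborel (\<lambda>x. indicator {0..} x *\<^sub>R exp (- x\<^sup>2)) (sqrt pi / 2)"
    by (rule gaussian_moment_0)
  have "(LBINT t=ereal 0..ereal y. exp (- (t\<^sup>2))) = (LBINT t:{0..y}. exp (- (t\<^sup>2)))"
    using assms by (rule interval_integral_Icc)
  also have "\<dots> = (\<integral>t. indicator {0..y} t *\<^sub>R exp (- (t\<^sup>2)) \<partial>lborel)"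
    by (simp add: set_lebesgue_integral_def)
  also have "\<dots> \<le> (\<integral>t. indicator {0..} t *\<^sub>R exp (- (t\<^sup>2)) \<partial>lborel)"
    using g unfolding has_bochner_integral_iff
    by (intro integral_mono_AE') (auto split: split_indicator)
  also have "\<dots> = sqrt pi / 2" using g by (simp add: has_bochner_integral_iff)
  finally have "(LBINT t=ereal 0..ereal y. exp (- (t\<^sup>2))) \<le> sqrt pi / 2" .
  then have "2 / sqrt pi * (LBINT t=ereal 0..ereal y. exp (- (t\<^sup>2))) \<le> 2 / sqrt pi * (sqrt pi / 2)"
    by (intro mult_left_mono) auto
  then show ?thesis unfolding erf_def by simp
qed

lemma erf_mono: "a \<le> b \<Longrightarrow> erf a \<le> erf b"
  by (rule DERIV_nonneg_imp_nondecreasing[of a b erf]) (auto intro!: exI erf_deriv)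

lemma erf_ge_m1: "erf x \<ge> -1"
proof (cases "x \<ge> 0")
  case True
  then have "erf 0 \<le> erf x" by (rule erf_mono)
  then show ?thesis by (simp add: erf_0)
next
  case False
  then have "erf (-x) \<le> 1" by (intro erf_le_1_nonneg) auto
  then show ?thesis by (simp add: erf_odd)
qed

lemma alg: fixes c E u :: real assumes nz: "1 + 2 * u\<^sup>2 \<noteq> 0" shows
 "0 + c * E +
    (((0 * E +
       E * - (real 2 * (1 * u ^ (2 - Suc 0))) * c) *
      u +
      1 * (c * E)) *
     (1 + 2 * u\<^sup>2) -
     c * E * u *
     (0 + (0 * u\<^sup>2 + real 2 * (1 * u ^ (2 - Suc 0)) * 2))) /
    ((1 + 2 * u\<^sup>2) * (1 + 2 * u\<^sup>2)) =
    c * E * 2 / (1 + 2 * u\<^sup>2)\<^sup>2"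
proof -
  define W where "W = 1 + 2 * u\<^sup>2"
  have W: "W \<noteq> 0" using nz by (simp add: W_def)
  have "c * E * 2 / (1 + 2 * u\<^sup>2)\<^sup>2 = c * E * 2 / (W * W)" by (simp add: W_def power2_eq_square)
  moreover have "0 + c * E +
    (((0 * E +
       E * - (real 2 * (1 * u ^ (2 - Suc 0))) * c) *
      u +
      1 * (c * E)) *
     (1 + 2 * u\<^sup>2) -
     c * E * u *
     (0 + (0 * u\<^sup>2 + real 2 * (1 * u ^ (2 - Suc 0)) * 2))) /
    ((1 + 2 * u\<^sup>2) * (1 + 2 * u\<^sup>2)) = c * E + (c * E * (1 - 2 * u\<^sup>2) * W - 4 * c * E * u\<^sup>2) / (W * W)"
    by (simp add: W_def power2_eq_square algebra_simps)
  moreover have "c * E + (c * E * (1 - 2 * u\<^sup>2) * W - 4 * c * E * u\<^sup>2) / (W * W) = c * E * 2 / (W * W)"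
    using W by (simp add: divide_simps) (simp add: W_def power2_eq_square algebra_simps)
  ultimately show ?thesis by linarith
qed

definition Qf :: "real \<Rightarrow> real" where
  "Qf u = 1 + erf u + 2 / sqrt pi * exp (- (u\<^sup>2)) * u / (1 + 2 * u\<^sup>2)"

lemma Qf_deriv: "(Qf has_real_derivative (2 / sqrt pi * exp (- (u\<^sup>2)) * 2 / (1 + 2 * u\<^sup>2)\<^sup>2)) (at u)"
proof -
  have pos: "1 + 2 * u\<^sup>2 > 0" by (simp add: add_pos_nonneg)
  have nz: "1 + 2 * u\<^sup>2 \<noteq> 0" using pos by simp
  show ?thesis
    unfolding Qf_def[abs_def]
    apply (rule derivative_eq_intros refl erf_deriv nz)+
    by (rule alg[OF nz])
qed

lemma Qf_mono: "a \<le> b \<Longrightarrow> Qf a \<le> Qf b"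
  by (rule DERIV_nonneg_imp_nondecreasing[of a b Qf]) (auto intro!: exI Qf_deriv)

lemma Qf_nonneg: "Qf u \<ge> 0"
proof (rule ccontr)
  assume "\<not> Qf u \<ge> 0"
  then have neg: "Qf u < 0" by simp
  have lim: "((\<lambda>x. 2 / sqrt pi * exp (- (x\<^sup>2)) * x / (1 + 2 * x\<^sup>2)) \<longlongrightarrow> 0) at_bot"
    by real_asymp
  have "eventually (\<lambda>x. 2 / sqrt pi * exp (- (x\<^sup>2)) * x / (1 + 2 * x\<^sup>2) > Qf u) at_bot"
    using order_tendstoD(1)[OF lim neg] .
  moreover have "eventually (\<lambda>x. x \<le> u) at_bot" by (rule eventually_le_at_bot)
  ultimately have "eventually (\<lambda>x. 2 / sqrt pi * exp (- (x\<^sup>2)) * x / (1 + 2 * x\<^sup>2) > Qf u \<and> x \<le> u) at_bot"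
    by (rule eventually_conj)
  then obtain N where N: "\<forall>x\<le>N. 2 / sqrt pi * exp (- (x\<^sup>2)) * x / (1 + 2 * x\<^sup>2) > Qf u \<and> x \<le> u"
    by (auto simp: eventually_at_bot_linorder)
  define x where "x = N"
  have e1: "2 / sqrt pi * exp (- (x\<^sup>2)) * x / (1 + 2 * x\<^sup>2) > Qf u" and e2: "x \<le> u"
    using N by (auto simp: x_def)
  have "Qf x \<le> Qf u" using e2 by (rule Qf_mono)
  moreover have "Qf x \<ge> 2 / sqrt pi * exp (- (x\<^sup>2)) * x / (1 + 2 * x\<^sup>2)"
    using erf_ge_m1[of x] by (simp add: Qf_def)
  ultimately show False using e1 by simp
qed

lemma key_ineq: "(1 + 2 * u\<^sup>2) * (1 + erf u) + u * (2 / sqrt pi) * exp (- (u\<^sup>2)) \<ge> 0"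
proof -
  have pos: "1 + 2 * u\<^sup>2 > 0" by (simp add: add_pos_nonneg)
  have "(1 + 2 * u\<^sup>2) * (1 + erf u) + u * (2 / sqrt pi) * exp (- (u\<^sup>2)) = (1 + 2 * u\<^sup>2) * Qf u"
    using pos by (simp add: Qf_def divide_simps)
  then show ?thesis using Qf_nonneg pos by simp
qed

lemma P_pos: "1 + erf u > 0"
proof (cases "u \<ge> 0")
  case True
  then show ?thesis using erf_mono[OF True] by (simp add: erf_0)
next
  case False
  have pos: "1 + 2 * u\<^sup>2 > 0" by (simp add: add_pos_nonneg)
  have "2 / sqrt pi * exp (- (u\<^sup>2)) * (-u) / (1 + 2 * u\<^sup>2) > 0"
    using False pos by (intro divide_pos_pos mult_pos_pos) auto
  then show ?thesis using Qf_nonneg[of u] by (simp add: Qf_def)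
qed

lemma erf_chain: "(f has_real_derivative f') (at x within S) \<Longrightarrow>
  ((\<lambda>x. erf (f x)) has_real_derivative (2 / sqrt pi * exp (- ((f x)\<^sup>2)) * f')) (at x within S)"
  using DERIV_chain2[OF erf_deriv] by blast

lemma F_deriv: assumes g: "g > 0" shows
  "((\<lambda>g. g * exp (- ((k / g)\<^sup>2)) / (1 + erf (k / g))) has_real_derivative
     (exp (- ((k / g)\<^sup>2)) * ((1 + 2 * (k / g)\<^sup>2) * (1 + erf (k / g)) + (k / g) * (2 / sqrt pi) * exp (- ((k / g)\<^sup>2)))
      / (1 + erf (k / g))\<^sup>2)) (at g)"
proof -
  have nz: "1 + erf (k / g) \<noteq> 0" using P_pos[of "k/g"] by simp
  have gz: "g \<noteq> 0" using g by simp
  show ?thesis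
    apply (rule derivative_eq_intros refl erf_chain nz gz)+
    using nz gz by (simp add: field_simps power2_eq_square)
qed

lemma F_mono: "mono_on {0<..} (\<lambda>g. g * exp (- ((k / g)\<^sup>2)) / (1 + erf (k / g)))"
  unfolding mono_on_def
proof (intro allI impI)
  fix r s :: real assume a: "r \<in> {0<..} \<and> s \<in> {0<..} \<and> r \<le> s"
  show "r * exp (- ((k / r)\<^sup>2)) / (1 + erf (k / r)) \<le> s * exp (- ((k / s)\<^sup>2)) / (1 + erf (k / s))"
  proof (rule DERIV_nonneg_imp_nondecreasing[of r s])
    show "r \<le> s" using a by simp
    fix x assume x: "r \<le> x" "x \<le> s"
    then have "x > 0" using a by simp
    show "\<exists>y. ((\<lambda>g. g * exp (- ((k / g)\<^sup>2)) / (1 + erf (k / g))) has_real_derivative y) (at x) \<and> 0 \<le> y"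
    proof (intro exI conjI)
      show "((\<lambda>g. g * exp (- ((k / g)\<^sup>2)) / (1 + erf (k / g))) has_real_derivative
     (exp (- ((k / x)\<^sup>2)) * ((1 + 2 * (k / x)\<^sup>2) * (1 + erf (k / x)) + (k / x) * (2 / sqrt pi) * exp (- ((k / x)\<^sup>2)))
      / (1 + erf (k / x))\<^sup>2)) (at x)" by (rule F_deriv[OF \<open>x > 0\<close>])
      show "0 \<le> (exp (- ((k / x)\<^sup>2)) * ((1 + 2 * (k / x)\<^sup>2) * (1 + erf (k / x)) + (k / x) * (2 / sqrt pi) * exp (- ((k / x)\<^sup>2)))
      / (1 + erf (k / x))\<^sup>2)"
        using key_ineq[of "k / x"] by (intro divide_nonneg_nonneg mult_nonneg_nonneg) auto
    qed
  qed
qed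

theorem theorem2:
  fixes n i j :: nat
    and w L :: "nat \<Rightarrow> nat \<Rightarrow> real" and lam :: "nat \<Rightarrow> real" and q :: "nat \<Rightarrow> nat \<Rightarrow> real"
    and beta tau d c delta g0 eps :: real
  assumes "n \<ge> 3"
    and "is_graph_laplacian n w L"
    and "is_eigendecomp n L lam q"
    and "d > 0" and "beta > 0" and "tau > 0"
    and "\<forall>k\<in>{2..n}. (lam k * tau, beta * tau) \<in> stab_region"
    and "i \<in> {1..n-1}" and "j \<in> {1..n-1}" and "i \<noteq> j"
    and "delta \<ge> 0" and "c > 0"
    and "g0 > 0" and "0 < eps" and "eps < 1"
  shows "let ds = d / (delta + c);
             E = condexp n lam q tau beta d ds i j;
             rho = corr n lam q tau beta g0 j i;
             h = hfun n lam q tau beta g0 d ds i j;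
             R = cascading_risk n lam q tau beta g0 eps d ds i j
         in (rho < 0 \<longrightarrow> mono_on {0<..} E) \<and>
            (rho > 0 \<longrightarrow> antimono_on {0<..} E) \<and>
            (rho < 0 \<longrightarrow> R = d / h (- eps) - 1) \<and>
            (rho > 0 \<longrightarrow> R = d / h eps - 1) \<and>
            (rho = 0 \<longrightarrow> R = 0)"
proof -
  define C where "C k l = tau ^ 3 / (2 * pi) *
     (\<Sum>m=1..n. (q m (Suc k) - q m k) * (q m (Suc l) - q m l) * fint (lam m * tau) (beta * tau))" for k l
  have cov_eq: "cov n lam q tau beta g k l = g\<^sup>2 * C k l" for g k l
    by (simp add: cov_def C_def)
  have sd_eq: "sd n lam q tau beta g k = g * sqrt (C k k)" if "g > 0" for g k
    using that by (simp add: sd_def cov_eq real_sqrt_mult)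
  have fint_nn: "fint x y \<ge> 0" for x y
    unfolding fint_def by (rule integral_nonneg_AE) auto
  have Cjj: "C j j \<ge> 0"
    unfolding C_def using \<open>tau > 0\<close>
    by (intro mult_nonneg_nonneg sum_nonneg mult_nonneg_nonneg[OF zero_le_square fint_nn]) auto
  define si where "si = sqrt (C i i)"
  define sj where "sj = sqrt (C j j)"
  define rho0 where "rho0 = C j i / (si * sj)"
  have corr_eq: "corr n lam q tau beta g j i = rho0" if "g > 0" for g
    using that unfolding corr_def cov_eq sd_eq[OF that] rho0_def si_def[symmetric] sj_def[symmetric]
    by (cases "si * sj = 0") (auto simp: field_simps power2_eq_square)
  define ds where "ds = d / (delta + c)"
  define a where "a = ds - d"
  define k where "k = a / (sqrt 2 * si)"
  define F where "F g = g * exp (- ((k / g)\<^sup>2)) / (1 + erf (k / g))" for g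
  define A where "A = sqrt (2 / pi) * rho0 * sj"
  have E_eq: "condexp n lam q tau beta d ds i j g = d - A * F g" if "g > 0" "si \<noteq> 0" for g
  proof -
    have e1: "(ds - d)\<^sup>2 / (2 * (g * si)\<^sup>2) = (k / g)\<^sup>2"
      by (simp add: k_def a_def power_divide power_mult_distrib)
    have e2: "(ds - d) / (sqrt 2 * (g * si)) = k / g"
      by (simp add: k_def a_def field_simps)
    have nz: "1 + erf (k / g) \<noteq> 0" using P_pos[of "k / g"] by simp
    show ?thesis
      unfolding condexp_def corr_eq[OF that(1)] sd_eq[OF that(1)] si_def[symmetric] sj_def[symmetric] e1 e2
      using nz by (simp add: A_def F_def field_simps)
  qed
  have H: "condexp n lam q tau beta d ds i j (g0 * sqrt (1 + e)) = hfun n lam q tau beta g0 d ds i j e"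
    if "-1 < e" for e
  proof -
    have gp: "g0 * sqrt (1 + e) > 0" using that \<open>g0 > 0\<close> by simp
    have h1: "(g0 * sqrt (1 + e) * si)\<^sup>2 = (g0 * si)\<^sup>2 * (1 + e)"
      using that by (simp add: power_mult_distrib)
    have h2: "sqrt 2 * (g0 * sqrt (1 + e) * si) = sqrt (2 * (1 + e)) * (g0 * si)"
    proof -
      have "sqrt 2 * (g0 * sqrt (1 + e) * si) = (sqrt 2 * sqrt (1 + e)) * (g0 * si)" by (simp add: mult_ac)
      also have "sqrt 2 * sqrt (1 + e) = sqrt (2 * (1 + e))" by (rule real_sqrt_mult[symmetric])
      finally show ?thesis .
    qed
    show ?thesis
      unfolding condexp_def hfun_def corr_eq[OF gp] corr_eq[OF \<open>g0 > 0\<close>] sd_eq[OF gp] sd_eq[OF \<open>g0 > 0\<close>]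
        si_def[symmetric] sj_def[symmetric] h1 h2
      by (simp add: mult_ac)
  qed
  define gl where "gl = g0 * sqrt (1 - eps)"
  define gu where "gu = g0 * sqrt (1 + eps)"
  have glp: "gl > 0" using \<open>g0 > 0\<close> \<open>eps < 1\<close> by (simp add: gl_def)
  have gup: "gu > 0" using \<open>g0 > 0\<close> \<open>eps > 0\<close> by (simp add: gu_def)
  have gl2: "gl\<^sup>2 = (1 - eps) * g0\<^sup>2" using \<open>eps < 1\<close> by (simp add: gl_def power_mult_distrib)
  have gu2: "gu\<^sup>2 = (1 + eps) * g0\<^sup>2" using \<open>eps > 0\<close> by (simp add: gu_def power_mult_distrib)
  have mono_eps: "(1 - eps) * g0\<^sup>2 \<le> (1 + eps) * g0\<^sup>2"
    using \<open>eps > 0\<close> by (intro mult_right_mono) auto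
  have gl_in: "gl \<in> ambiguity_set g0 eps"
    using glp gl2 mono_eps by (simp add: ambiguity_set_def)
  have gu_in: "gu \<in> ambiguity_set g0 eps"
    using gup gu2 mono_eps by (simp add: ambiguity_set_def)
  have gl_le: "gl \<le> g" if "g \<in> ambiguity_set g0 eps" for g
    using that gl2 by (rule_tac power2_le_imp_le) (auto simp: ambiguity_set_def)
  have le_gu: "g \<le> gu" if "g \<in> ambiguity_set g0 eps" for g
    using that gu2 gup by (rule_tac power2_le_imp_le) (auto simp: ambiguity_set_def)
  have S_pos: "g > 0" if "g \<in> ambiguity_set g0 eps" for g
    using that by (simp add: ambiguity_set_def)
  have rho_eq: "corr n lam q tau beta g0 j i = rho0" using corr_eq \<open>g0 > 0\<close> by simp
  have nzs: "si \<noteq> 0 \<and> sj \<noteq> 0" if "rho0 \<noteq> 0"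
    using that by (auto simp: rho0_def)
  have sj_nn: "sj \<ge> 0" using Cjj by (simp add: sj_def)
  have Fm: "F r \<le> F s" if "0 < r" "r \<le> s" for r s
    using F_mono[of k] that unfolding mono_on_def F_def by auto
  let ?E = "condexp n lam q tau beta d ds i j"
  have P1: "mono_on {0<..} ?E" if "rho0 < 0"
  proof -
    have "si \<noteq> 0" "sj \<noteq> 0" using nzs that by auto
    then have "sj > 0" using sj_nn by simp
    moreover have "sqrt (2 / pi) * rho0 < 0" using that by (simp add: mult_pos_neg)
    ultimately have "A < 0" unfolding A_def by (rule mult_neg_pos[rotated])
    show ?thesis unfolding mono_on_def
    proof (intro allI impI)
      fix r s :: real assume rs: "r \<in> {0<..} \<and> s \<in> {0<..} \<and> r \<le> s"
      then have "F r \<le> F s" using Fm by auto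
      then have "A * F s \<le> A * F r" using \<open>A < 0\<close> by (intro mult_left_mono_neg) auto
      then show "?E r \<le> ?E s" using E_eq[of r] E_eq[of s] rs \<open>si \<noteq> 0\<close> by auto
    qed
  qed
  have P2: "antimono_on {0<..} ?E" if "rho0 > 0"
  proof -
    have "si \<noteq> 0" "sj \<noteq> 0" using nzs that by auto
    then have "sj > 0" using sj_nn by simp
    then have "A > 0" using that by (simp add: A_def)
    show ?thesis unfolding monotone_on_def
    proof (intro ballI impI)
      fix r s :: real assume "r \<in> {0<..}" "s \<in> {0<..}" "r \<le> s"
      then have rs: "r \<in> {0<..} \<and> s \<in> {0<..} \<and> r \<le> s" by simp
      then have "F r \<le> F s" using Fm by auto
      then have "A * F r \<le> A * F s" using \<open>A > 0\<close> by (intro mult_left_mono) auto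
      then show "?E s \<le> ?E r" using E_eq[of r] E_eq[of s] rs \<open>si \<noteq> 0\<close> by auto
    qed
  qed
  have R1: "cascading_risk n lam q tau beta g0 eps d ds i j = d / hfun n lam q tau beta g0 d ds i j (- eps) - 1"
    if "rho0 < 0"
  proof -
    have m: "mono_on {0<..} ?E" using P1 that .
    have "(INF g\<in>ambiguity_set g0 eps. ?E g) = ?E gl"
      using gl_in gl_le S_pos glp m by (intro cInf_eq_minimum) (auto simp: mono_on_def)
    moreover have "?E gl = hfun n lam q tau beta g0 d ds i j (- eps)"
      using H[of "- eps"] \<open>eps < 1\<close> by (simp add: gl_def)
    ultimately show ?thesis by (simp add: cascading_risk_def)
  qed
  have R2: "cascading_risk n lam q tau beta g0 eps d ds i j = d / hfun n lam q tau beta g0 d ds i j eps - 1"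
    if "rho0 > 0"
  proof -
    have m: "antimono_on {0<..} ?E" using P2 that .
    have "(INF g\<in>ambiguity_set g0 eps. ?E g) = ?E gu"
      using gu_in le_gu S_pos gup m by (intro cInf_eq_minimum) (auto simp: monotone_on_def)
    moreover have "?E gu = hfun n lam q tau beta g0 d ds i j eps"
      using H[of eps] \<open>eps > 0\<close> by (simp add: gu_def)
    ultimately show ?thesis by (simp add: cascading_risk_def)
  qed
  have R0: "cascading_risk n lam q tau beta g0 eps d ds i j = 0" if "rho0 = 0"
  proof -
    have "?E g = d" if "g \<in> ambiguity_set g0 eps" for g
      using corr_eq[OF S_pos[OF that]] \<open>rho0 = 0\<close> by (simp add: condexp_def)
    then have "(INF g\<in>ambiguity_set g0 eps. ?E g) = (INF g\<in>ambiguity_set g0 eps. d)"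
      by (intro INF_cong) auto
    also have "\<dots> = d" using gl_in by (intro cINF_const) auto
    finally show ?thesis using \<open>d > 0\<close> by (simp add: cascading_risk_def)
  qed
  show ?thesis
    unfolding Let_def ds_def[symmetric] rho_eq
    using P1 P2 R1 R2 R0 by blast
qed

end
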